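(* Let $d,\mathfrak d,N\in\mathbb N$, $L\in\mathbb R$, $u\in[-\infty,\infty)$, $v\in(u,\infty]$ satisfy $\mathfrak d\ge 2d^2(N+1)^d+5d(N+1)^{2d}+\frac43(N+1)^{3d}$, let $\|\cdot\|$ be the Euclidean norm on $\mathbb R^d$, let $p=(p_1,\dots,p_d),q=(q_1,\dots,q_d)\in\mathbb R^d$ satisfy $p_i\le q_i$ for all $i$ and $\max_j(q_j-p_j)>0$, let $D=\prod_{i=1}^d[p_i,q_i]$, let $\mathcal M=\{y\in\mathbb R^d\colon\exists k_1,\dots,k_d\in\{0,1,\dots,N\}\ \forall i\colon y_i=p_i+\frac{k_i}N(q_i-p_i)\}$, and let $f\colon D\to[u,v]\cap\mathbb R$ satisfy $|f(x)-f(y)|\le L\|x-y\|$ for all $x,y\in D$. Then there exist $\theta\in\mathbb R^{\mathfrak d}$, $\mathfrak L\in\mathbb N$ and $l=(l_0,\dots,l_{\mathfrak L})\in\mathbb N^{\mathfrak L+1}$ with $l_0=d$ and $l_{\mathfrak L}=1$ such that $\|\theta\|_\infty\le\max\{1,L,\|p\|_\infty,\|q\|_\infty,2\sup_{z\in D}|f(z)|\}$, $\sum_{k=1}^{\mathfrak L}l_k(l_{k-1}+1)\le\mathfrak d$, and $$\sup_{x\in D}|f(x)-\mathscr N^{\theta,l}_{u,v}(x)|\le\frac LN\sum_{i=1}^d|q_i-p_i|.$$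
   Context: $\|\cdot\|_\infty$ is the maximum norm. For $r,s\in\mathbb N$, $k\in\mathbb N_0$, $\theta\in\mathbb R^{\mathfrak d}$ with $\mathfrak d\ge k+rs+r$, $\mathcal A^{\theta,k}_{r,s}\colon\mathbb R^s\to\mathbb R^r$ has $i$-th component $x\mapsto\sum_{j=1}^s\theta_{k+(i-1)s+j}x_j+\theta_{k+rs+i}$. $\mathfrak C_{u,v,n}$ applies $y\mapsto\max\{u,\min\{y,v\}\}$ componentwise on $\mathbb R^n$ and $\mathfrak R_n$ applies $y\mapsto\max\{y,0\}$ componentwise. For $l=(l_0,\dots,l_{\mathfrak L})$ with $\mathfrak d\ge\sum_kl_k(l_{k-1}+1)$ and $s_k=\sum_{j=1}^kl_j(l_{j-1}+1)$, $\mathscr N^{\theta,l}_{u,v}=\mathfrak C_{u,v,l_{\mathfrak L}}\circ\mathcal A^{\theta,s_{\mathfrak L-1}}_{l_{\mathfrak L},l_{\mathfrak L-1}}\circ\mathfrak R_{l_{\mathfrak L-1}}\circ\cdots\circ\mathfrak R_{l_1}\circ\mathcal A^{\theta,0}_{l_1,l_0}\colon\mathbb R^{l_0}\to\mathbb R^{l_{\mathfrak L}}$ (for $\mathfrak L=1$ just $\mathfrak C_{u,v,l_1}\circ\mathcal A^{\theta,0}_{l_1,l_0}$). *)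

theory Defs
  imports "HOL-Analysis.Analysis"
begin

text \<open>Vectors of R^n are represented as real lists of length n (0-based list
indices; component i of the paper is list entry i-1). Parameter vectors
theta in R^dd are real lists of length dd.\<close>

definition maxnorm :: "real list \<Rightarrow> real" where
  "maxnorm xs = Max (insert 0 (abs ` set xs))"

definition eucl_dist :: "real list \<Rightarrow> real list \<Rightarrow> real" where
  "eucl_dist x y = sqrt (\<Sum>i<length x. (x ! i - y ! i)^2)"

text \<open>Affine map A^{theta,k}_{r,s}: component i (1-based) is
  sum_{j=1..s} theta_{k+(i-1)s+j} x_j + theta_{k+rs+i}; in 0-based list terms below.\<close>
definition affine :: "real list \<Rightarrow> nat \<Rightarrow> nat \<Rightarrow> nat \<Rightarrow> real list \<Rightarrow> real list" where
  "affine \<theta> k r s x =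
     map (\<lambda>i. (\<Sum>j<s. \<theta> ! (k + i * s + j) * x ! j) + \<theta> ! (k + r * s + i)) [0..<r]"

definition relu :: "real list \<Rightarrow> real list" where
  "relu x = map (\<lambda>y. max y 0) x"

definition clip :: "ereal \<Rightarrow> ereal \<Rightarrow> real list \<Rightarrow> real list" where
  "clip u v x = map (\<lambda>y. real_of_ereal (max u (min (ereal y) v))) x"

definition offs :: "nat list \<Rightarrow> nat \<Rightarrow> nat" where
  "offs l k = (\<Sum>j\<in>{1..k}. l ! j * (l ! (j - 1) + 1))"

fun hidden :: "real list \<Rightarrow> nat list \<Rightarrow> nat \<Rightarrow> real list \<Rightarrow> real list" where
  "hidden \<theta> l 0 x = x"
| "hidden \<theta> l (Suc k) x =
     relu (affine \<theta> (offs l k) (l ! Suc k) (l ! k) (hidden \<theta> l k x))"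

definition realization :: "real list \<Rightarrow> nat list \<Rightarrow> ereal \<Rightarrow> ereal \<Rightarrow> real list \<Rightarrow> real list" where
  "realization \<theta> l u v x =
     (let L = length l - 1 in
      clip u v (affine \<theta> (offs l (L - 1)) (l ! L) (l ! (L - 1)) (hidden \<theta> l (L - 1) x)))"

end

theory Submission
  imports Defs
begin


definition blk :: "(nat \<Rightarrow> nat \<Rightarrow> real) \<Rightarrow> (nat \<Rightarrow> real) \<Rightarrow> nat \<Rightarrow> nat \<Rightarrow> real list" where
  "blk W b r s = concat (map (\<lambda>i. map (\<lambda>j. W i j) [0..<s]) [0..<r]) @ map b [0..<r]"

lemma idx_lt: "i < r \<Longrightarrow> j < (s::nat) \<Longrightarrow> i * s + j < r * s"
proof -
  assume a: "i < r" "j < s"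
  have "i * s + j < i * s + s" using a by simp
  also have "\<dots> = Suc i * s" by simp
  also have "\<dots> \<le> r * s" using a by (intro mult_le_mono1) simp
  finally show ?thesis .
qed

lemma nth_concat_eqlen:
  assumes "\<And>i. i < r \<Longrightarrow> length (g i) = s" "i < r" "j < s"
  shows "concat (map g [0..<r]) ! (i * s + j) = g i ! j"
  using assms
proof (induction r)
  case 0 then show ?case by simp
next
  case (Suc r)
  have len: "length (concat (map g [0..<r])) = r * s"
    using Suc.prems(1) by (induction r) auto
  show ?case
  proof (cases "i < r")
    case True
    have "i * s + j < r * s"
      using idx_lt[OF True Suc.prems(3)] .
    then show ?thesis using Suc True len by (simp add: nth_append)
  next
    case False
    then have "i = r" using Suc.prems(2) by simp
    then show ?thesis using len Suc.prems by (simp add: nth_append)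
  qed
qed

lemma length_blk: "length (blk W b r s) = r * s + r"
proof -
  have "length (concat (map (\<lambda>i. map (\<lambda>j. W i j) [0..<s]) [0..<r])) = r * s"
    by (induction r) auto
  then show ?thesis by (simp add: blk_def)
qed

lemma blk_W: "i < r \<Longrightarrow> j < s \<Longrightarrow> blk W b r s ! (i * s + j) = W i j"
proof -
  assume a: "i < r" "j < s"
  have len: "length (concat (map (\<lambda>i. map (\<lambda>j. W i j) [0..<s]) [0..<r])) = r * s"
    by (induction r) auto
  have "i * s + j < r * s"
    using idx_lt[OF a] .
  then show ?thesis using a len
    by (simp add: blk_def nth_append nth_concat_eqlen[where s=s])
qed

lemma blk_b: "i < r \<Longrightarrow> blk W b r s ! (r * s + i) = b i"
proof -
  have len: "length (concat (map (\<lambda>i. map (\<lambda>j. W i j) [0..<s]) [0..<r])) = r * s"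
    by (induction r) auto
  assume "i < r" then show ?thesis using len by (simp add: blk_def nth_append)
qed

lemma affine_blk:
  assumes "\<forall>t < r * s + r. \<theta> ! (k + t) = blk W b r s ! t"
  shows "affine \<theta> k r s x = map (\<lambda>i. (\<Sum>j<s. W i j * x ! j) + b i) [0..<r]"
  unfolding affine_def
proof (rule map_cong[OF refl])
  fix i assume "i \<in> set [0..<r]"
  then have i: "i < r" by simp
  have "(\<Sum>j<s. \<theta> ! (k + i * s + j) * x ! j) = (\<Sum>j<s. W i j * x ! j)"
  proof (rule sum.cong[OF refl])
    fix j assume "j \<in> {..<s}"
    then have j: "j < s" by simp
    have "i * s + j < r * s"
      using idx_lt[OF i j] .
    then have "\<theta> ! (k + (i * s + j)) = W i j" using assms blk_W[OF i j] by simp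
    then show "\<theta> ! (k + i * s + j) * x ! j = W i j * x ! j" by (simp add: add.assoc)
  qed
  moreover have "\<theta> ! (k + r * s + i) = b i" using assms blk_b[OF i, of W b s] i
    by (metis add.assoc add_less_cancel_left)
  ultimately show "(\<Sum>j<s. \<theta> ! (k + i * s + j) * x ! j) + \<theta> ! (k + r * s + i) = (\<Sum>j<s. W i j * x ! j) + b i"
    by simp
qed

lemma nth_concat_blocks:
  assumes "k < n" "t < length (B k)"
  shows "(concat (map B [0..<n]) @ zs) ! ((\<Sum>j<k. length (B j)) + t) = B k ! t"
proof -
  have lenk: "length (concat (map B [0..<k])) = (\<Sum>j<k. length (B j))"
    by (induction k) auto
  have "[0..<n] = [0..<k] @ k # [Suc k..<n]"
    using assms(1) by (metis upt_add_eq_append upt_conv_Cons le0 le_add_diff_inverse less_imp_le_nat)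
  then have "concat (map B [0..<n]) @ zs = concat (map B [0..<k]) @ B k @ (concat (map B [Suc k..<n]) @ zs)"
    by simp
  then show ?thesis using lenk assms(2) by (simp add: nth_append)
qed



lemma sum_support_lt:
  assumes "m \<le> w" "\<And>c. m \<le> c \<Longrightarrow> g c = 0"
  shows "(\<Sum>c<w. g c) = (\<Sum>c<(m::nat). g c)"
  by (rule sum.mono_neutral_right) (use assms in auto)

locale netc =
  fixes d N :: nat and L :: real and p q :: "real list" and f :: "real list \<Rightarrow> real"
  assumes d1: "d \<ge> 1" and N1: "N \<ge> 1"
begin

definition K where "K = (N+1)^d"
definition G where "G = List.n_lists d [0..<N+1]"
definition yc :: "nat \<Rightarrow> nat \<Rightarrow> real" where
  "yc j i = p!i + real (min (G!j!i) N) / real N * (q!i - p!i)"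
definition y where "y j = map (yc j) [0..<d]"
definition a where "a j x = f (y j) - L * (\<Sum>i<d. \<bar>x!i - yc j i\<bar>)"
definition M where "M j x = Max ((\<lambda>t. a t x) ` {..j})"

definition hv :: "nat \<Rightarrow> real list \<Rightarrow> nat \<Rightarrow> real" where
 "hv k x n = (if k = 1 then max ((if even n then 1 else -1) * (x ! ((n mod (2*d)) div 2) - yc (n div (2*d)) ((n mod (2*d)) div 2))) 0
   else if n = 0 then max (M (k-2) x) 0
   else if n = 1 then max (- M (k-2) x) 0
   else if n = 2 then max (a (k-1) x - M (k-2) x) 0
   else max ((if even n then -1 else 1) * a (k + (n-3) div 2) x) 0)"

definition W0 :: "nat \<Rightarrow> nat \<Rightarrow> real" where
 "W0 n c = (if c = (n mod (2*d)) div 2 then (if even n then 1 else -1) else 0)"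
definition W1 :: "nat \<Rightarrow> nat \<Rightarrow> real" where
 "W1 n c = (if n = 0 then (if c div (2*d) = 0 then -L else 0)
      else if n = 1 then (if c div (2*d) = 0 then L else 0)
      else if n = 2 then (if c div (2*d) = 1 then -L else if c div (2*d) = 0 then L else 0)
      else (if c div (2*d) = (n-3) div 2 + 2 then (if even n then L else -L) else 0))"
definition Wc :: "nat \<Rightarrow> nat \<Rightarrow> real" where
 "Wc n c = (if n = 0 then (if c = 0 then 1 else if c = 1 then -1 else if c = 2 then 1 else 0)
      else if n = 1 then (if c = 0 then -1 else if c = 1 then 1 else if c = 2 then -1 else 0)
      else if n = 2 then (if c = 0 then -1 else if c = 1 then 1 else if c = 2 then -1
                          else if c = 3 then 1 else if c = 4 then -1 else 0)
      else (if c = n + 2 then 1 else 0))"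
definition W :: "nat \<Rightarrow> nat \<Rightarrow> nat \<Rightarrow> real" where
 "W k = (if k = 0 then W0 else if k = 1 then W1 else Wc)"

definition Bv :: "nat \<Rightarrow> nat \<Rightarrow> real" where
 "Bv k n = (if k = 0 then (if even n then -1 else 1) * yc (n div (2*d)) ((n mod (2*d)) div 2)
   else if k = 1 then (if n = 0 then f (y 0) else if n = 1 then - f (y 0) else if n = 2 then f (y 1) - f (y 0)
      else (if even n then -1 else 1) * f (y ((n-3) div 2 + 2)))
   else 0)"

definition w :: "nat \<Rightarrow> nat" where
  "w m = (if m = 0 then d else if m = 1 then 2*d*K else if m \<le> K then 2*K - 2*m + 3 else 1)"

definition ll where "ll = map w [0..<K+2]"

lemma K2: "K \<ge> 2"
proof -
  have "(2::nat)^1 \<le> 2^d" using d1 by (intro power_increasing) auto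
  also have "\<dots> \<le> (N+1)^d" using N1 by (intro power_mono) auto
  finally show ?thesis by (simp add: K_def)
qed

lemma M_Suc: "M (Suc j) x = max (M j x) (a (Suc j) x)"
proof -
  have "{..Suc j} = insert (Suc j) {..j}" by auto
  then show ?thesis unfolding M_def by (simp add: max.commute)
qed

lemma M_0: "M 0 x = a 0 x" by (simp add: M_def)

lemma T0: assumes "n < 2*d*K"
  shows "max ((\<Sum>c<d. W 0 n c * x!c) + Bv 0 n) 0 = hv 1 x n"
proof -
  have "n mod (2*d) < 2*d" using d1 by simp
  moreover have "\<And>m. m < 2*d \<Longrightarrow> m div 2 < d" by presburger
  ultimately have i: "(n mod (2*d)) div 2 < d" by blast
  have "(\<Sum>c<d. W 0 n c * x!c) = (if even n then 1 else -1) * x ! ((n mod (2*d)) div 2)"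
    unfolding W_def W0_def using i by (simp add: if_distrib[of "\<lambda>z. z * _"] sum.delta cong: if_cong)
  then show ?thesis unfolding hv_def Bv_def by (simp add: algebra_simps)
qed


lemma hv1_idx: assumes "i < d" "s < 2"
  shows "hv 1 x (j*(2*d) + i*2 + s) = max ((if s = 0 then 1 else -1) * (x!i - yc j i)) 0"
proof -
  have lt: "i*2 + s < 2*d" using assms by linarith
  have eq: "j*(2*d) + i*2 + s = (i*2 + s) + j*(2*d)" by simp
  have md: "(j*(2*d) + i*2 + s) mod (2*d) = i*2 + s"
    unfolding eq mod_mult_self1 using lt by simp
  have dv: "(j*(2*d) + i*2 + s) div (2*d) = j"
    unfolding eq using lt d1 by (simp add: div_mult_self1)
  have ev: "even (j*(2*d) + i*2 + s) \<longleftrightarrow> s = 0" using assms(2) by auto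
  have i2: "(i*2 + s) div 2 = i" using assms(2) by auto
  show ?thesis unfolding hv_def using md dv ev i2 by simp
qed

lemma Sblock: assumes "j < K"
  shows "(\<Sum>c<2*d*K. (if c div (2*d) = j then hv 1 x c else 0)) = (\<Sum>i<d. \<bar>x!i - yc j i\<bar>)"
proof -
  let ?g = "\<lambda>c. (if c div (2*d) = j then hv 1 x c else 0)"
  have "(\<Sum>c<2*d*K. ?g c) = (\<Sum>m<K. \<Sum>c\<in>{m*(2*d)..<m*(2*d)+2*d}. ?g c)"
    using sum.nat_group[of ?g "2*d" K] by (simp add: mult.commute)
  also have "\<dots> = (\<Sum>m<K. if m = j then (\<Sum>c\<in>{m*(2*d)..<m*(2*d)+2*d}. hv 1 x c) else 0)"
  proof (rule sum.cong[OF refl])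
    fix m assume "m \<in> {..<K}"
    have "\<And>c. c \<in> {m*(2*d)..<m*(2*d)+2*d} \<Longrightarrow> c div (2*d) = m"
    proof -
      fix c assume "c \<in> {m*(2*d)..<m*(2*d)+2*d}"
      then have "m*(2*d) \<le> c" "c < Suc m * (2*d)" by auto
      then show "c div (2*d) = m" using div_nat_eqI[of "2*d" m c] by (simp add: mult.commute)
    qed
    then show "(\<Sum>c\<in>{m*(2*d)..<m*(2*d)+2*d}. ?g c) = (if m = j then (\<Sum>c\<in>{m*(2*d)..<m*(2*d)+2*d}. hv 1 x c) else 0)"
      by (auto intro!: sum.cong)
  qed
  also have "\<dots> = (\<Sum>c\<in>{j*(2*d)..<j*(2*d)+2*d}. hv 1 x c)"
    using assms by (simp add: sum.delta)
  also have "\<dots> = (\<Sum>t\<in>{0..<2*d}. hv 1 x (t + j*(2*d)))"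
    using sum.shift_bounds_nat_ivl[of "hv 1 x" 0 "j*(2*d)" "2*d"] by (simp add: add.commute)
  also have "\<dots> = (\<Sum>t<d*2. hv 1 x (j*(2*d) + t))"
    by (simp add: atLeast0LessThan add.commute mult.commute)
  also have "\<dots> = (\<Sum>i<d. \<Sum>t\<in>{i*2..<i*2+2}. hv 1 x (j*(2*d) + t))"
    using sum.nat_group[of "\<lambda>t. hv 1 x (j*(2*d) + t)" 2 d] by simp
  also have "\<dots> = (\<Sum>i<d. \<bar>x!i - yc j i\<bar>)"
  proof (rule sum.cong[OF refl])
    fix i assume "i \<in> {..<d}"
    then have i: "i < d" by simp
    have "{i*2..<i*2+2} = {i*2, i*2+1}" by auto
    then have "(\<Sum>t\<in>{i*2..<i*2+2}. hv 1 x (j*(2*d) + t)) = hv 1 x (j*(2*d) + i*2 + 0) + hv 1 x (j*(2*d) + i*2 + 1)"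
      by (simp add: add.assoc)
    also have "\<dots> = \<bar>x!i - yc j i\<bar>" using hv1_idx[OF i, of 0 x j] hv1_idx[OF i, of 1 x j] by simp
    finally show "(\<Sum>t\<in>{i*2..<i*2+2}. hv 1 x (j*(2*d) + t)) = \<bar>x!i - yc j i\<bar>" .
  qed
  finally show ?thesis .
qed


abbreviation SS where "SS j x \<equiv> (\<Sum>c<2*d*K. (if c div (2*d) = j then hv 1 x c else 0))"

lemma a_S: "j < K \<Longrightarrow> a j x = f (y j) - L * SS j x"
  using Sblock by (simp add: a_def)

lemma w2: "w 2 = 2*K - 1" "w 1 = 2*d*K" "w 0 = d"
  using K2 by (auto simp: w_def)

lemma hv_ge2:
  assumes "k \<noteq> 1"
  shows "hv k x 0 = max (M (k-2) x) 0" "hv k x 1 = max (- M (k-2) x) 0"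
    "hv k x 2 = max (a (k-1) x - M (k-2) x) 0"
    "n \<ge> 3 \<Longrightarrow> hv k x n = max ((if even n then -1 else 1) * a (k + (n-3) div 2) x) 0"
  using assms by (simp_all add: hv_def)

lemma T1: assumes "n < w 2"
  shows "max ((\<Sum>c<w 1. W 1 n c * hv 1 x c) + Bv 1 n) 0 = hv 2 x n"
proof -
  let ?h = "hv 1 x"
  consider "n = 0" | "n = 1" | "n = 2" | "n \<ge> 3" by linarith
  then show ?thesis
  proof cases
    case 1
    have "(\<Sum>c<w 1. W 1 n c * ?h c) = (\<Sum>c<w 1. -L * (if c div (2*d) = 0 then ?h c else 0))"
      using 1 by (intro sum.cong) (simp_all add: W_def W1_def)
    also have "\<dots> = -L * SS 0 x" by (simp only: sum_distrib_left[symmetric] w2)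
    finally have e: "(\<Sum>c<w 1. W 1 n c * ?h c) + Bv 1 n = a 0 x"
      using 1 a_S[of 0 x] K2 by (simp add: Bv_def)
    show ?thesis using e 1 hv_ge2(1)[of 2 x] by (simp add: M_0)
  next
    case 2
    have "(\<Sum>c<w 1. W 1 n c * ?h c) = (\<Sum>c<w 1. L * (if c div (2*d) = 0 then ?h c else 0))"
      using 2 by (intro sum.cong) (simp_all add: W_def W1_def)
    also have "\<dots> = L * SS 0 x" by (simp only: sum_distrib_left[symmetric] w2)
    finally have e: "(\<Sum>c<w 1. W 1 n c * ?h c) + Bv 1 n = - a 0 x"
      using 2 a_S[of 0 x] K2 by (simp add: Bv_def)
    show ?thesis using e 2 hv_ge2(2)[of 2 x] by (simp add: M_0)
  next
    case 3
    have "(\<Sum>c<w 1. W 1 n c * ?h c) = (\<Sum>c<w 1. -L * (if c div (2*d) = 1 then ?h c else 0)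
          + L * (if c div (2*d) = 0 then ?h c else 0))"
      using 3 by (intro sum.cong) (simp_all add: W_def W1_def)
    also have "\<dots> = -L * SS 1 x + L * SS 0 x" by (simp only: sum.distrib sum_distrib_left[symmetric] w2)
    finally have e: "(\<Sum>c<w 1. W 1 n c * ?h c) + Bv 1 n = a 1 x - a 0 x"
      using 3 a_S[of 0 x] a_S[of 1 x] K2 by (simp add: Bv_def)
    show ?thesis using e 3 hv_ge2(3)[of 2 x] by (simp add: M_0)
  next
    case 4
    define j where "j = (n-3) div 2 + 2"
    have jK: "j < K" using assms 4 K2 unfolding j_def w2 by linarith
    define \<sigma> :: real where "\<sigma> = (if even n then -1 else 1)"
    have "(\<Sum>c<w 1. W 1 n c * ?h c) = (\<Sum>c<w 1. (- \<sigma> * L) * (if c div (2*d) = j then ?h c else 0))"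
      using 4 by (intro sum.cong) (simp_all add: W_def W1_def j_def \<sigma>_def)
    also have "\<dots> = - \<sigma> * L * SS j x" by (simp only: sum_distrib_left[symmetric] w2)
    finally have e: "(\<Sum>c<w 1. W 1 n c * ?h c) + Bv 1 n = \<sigma> * a j x"
      using 4 a_S[OF jK, of x] by (simp add: Bv_def j_def \<sigma>_def algebra_simps)
    have "j = 2 + (n-3) div 2" by (simp add: j_def)
    then show ?thesis using e 4 hv_ge2(4)[of 2 n x] by (simp add: \<sigma>_def)
  qed
qed


lemma wk: "2 \<le> k \<Longrightarrow> k \<le> K \<Longrightarrow> w k = 2*K - 2*k + 3"
  by (simp add: w_def)

lemma sum3: "(\<Sum>c<(3::nat). g c) = g 0 + g 1 + (g 2 :: real)"
  by (simp add: numeral_eq_Suc)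
lemma sum5: "(\<Sum>c<(5::nat). g c) = g 0 + g 1 + g 2 + g 3 + (g 4 :: real)"
  by (simp add: numeral_eq_Suc)

lemma maxid: "max m 0 - max (-m) 0 + max (b - m) 0 = max m (b::real)"
  by (auto simp: max_def)

lemma row0: "3 \<le> wd \<Longrightarrow> (\<Sum>c<wd. Wc 0 c * h c) = h 0 - h 1 + h 2"
  by (subst sum_support_lt[of 3]) (auto simp: Wc_def sum3)

lemma Tk: assumes "2 \<le> k" "k < K" "n < w (k+1)"
  shows "max ((\<Sum>c<w k. W k n c * hv k x c) + Bv k n) 0 = hv (k+1) x n"
proof -
  let ?h = "hv k x"
  have wk1: "w (k+1) = 2*K - 2*k + 1" using assms wk[of "k+1"] by simp
  have wkk: "w k = w (k+1) + 2" "w (k+1) \<ge> 3" using assms wk[of k] wk1 by auto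
  have Bz: "Bv k n = 0" using assms by (simp add: Bv_def)
  have Wk: "W k = Wc" using assms by (simp add: W_def)
  have k1: "k \<noteq> 1" "k + 1 \<noteq> 1" using assms by auto
  have Mk: "M (k-1) x = max (M (k-2) x) (a (k-1) x)"
    using M_Suc[of "k-2" x] assms by (simp add: Suc_diff_Suc numeral_2_eq_2)
  have h3: "?h 3 = max (a k x) 0" "?h 4 = max (- a k x) 0"
    using hv_ge2(4)[OF k1(1), of 3 x] hv_ge2(4)[OF k1(1), of 4 x] by simp_all
  consider "n = 0" | "n = 1" | "n = 2" | "n \<ge> 3" by linarith
  then show ?thesis
  proof cases
    case 1
    have "(\<Sum>c<w k. Wc 0 c * ?h c) = ?h 0 - ?h 1 + ?h 2" by (rule row0) (use wkk in simp)
    then have "(\<Sum>c<w k. W k n c * ?h c) = ?h 0 - ?h 1 + ?h 2" using 1 Wk by simp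
    also have "\<dots> = M (k-1) x" using Mk maxid unfolding hv_ge2[OF k1(1)] by simp
    finally show ?thesis using 1 Bz hv_ge2(1)[OF k1(2)] by simp
  next
    case 2
    have "(\<Sum>c<w k. W k n c * ?h c) = (\<Sum>c<3. W k n c * ?h c)"
      using 2 Wk wkk by (intro sum_support_lt) (auto simp: Wc_def)
    also have "\<dots> = - (?h 0 - ?h 1 + ?h 2)" using 2 Wk by (simp add: sum3 Wc_def)
    also have "\<dots> = - M (k-1) x" using Mk maxid unfolding hv_ge2[OF k1(1)] by simp
    finally show ?thesis using 2 Bz hv_ge2(2)[OF k1(2)] by simp
  next
    case 3
    have "(\<Sum>c<w k. W k n c * ?h c) = (\<Sum>c<5. W k n c * ?h c)"
      using 3 Wk wkk by (intro sum_support_lt) (auto simp: Wc_def)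
    also have "\<dots> = - (?h 0 - ?h 1 + ?h 2) + (?h 3 - ?h 4)" using 3 Wk by (simp add: sum5 Wc_def)
    also have "\<dots> = a k x - M (k-1) x" using Mk maxid h3 unfolding hv_ge2(1-3)[OF k1(1)] by (simp add: max_def)
    finally show ?thesis using 3 Bz hv_ge2(3)[OF k1(2)] by simp
  next
    case 4
    have lt: "n + 2 < w k" using assms wkk by simp
    have "(\<Sum>c<w k. W k n c * ?h c) = (\<Sum>c<w k. if c = n + 2 then ?h c else 0)"
      using 4 Wk by (intro sum.cong) (auto simp: Wc_def)
    also have "\<dots> = ?h (n+2)" using lt by (simp add: sum.delta)
    finally have e: "(\<Sum>c<w k. W k n c * ?h c) = ?h (n+2)" .
    have "?h (n+2) \<ge> 0" using 4 hv_ge2(4)[OF k1(1), of "n+2" x] by simp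
    moreover have "?h (n+2) = hv (k+1) x n"
    proof -
      have "k + (n + 2 - 3) div 2 = k + 1 + (n - 3) div 2" using 4 by presburger
      moreover have "even (n+2) = even n" by simp
      ultimately show ?thesis using 4 hv_ge2(4)[OF k1(1), of "n+2" x] hv_ge2(4)[OF k1(2), of n x] by simp
    qed
    ultimately show ?thesis using e Bz by simp
  qed
qed

lemma Tout: "(\<Sum>c<w K. W K 0 c * hv K x c) + Bv K 0 = M (K-1) x"
proof -
  have K1: "K \<noteq> 1" "K \<noteq> 0" using K2 by auto
  have wK: "w K = 3" using wk[of K] K2 by simp
  have Mk: "M (K-1) x = max (M (K-2) x) (a (K-1) x)"
    using M_Suc[of "K-2" x] K2 by (simp add: Suc_diff_Suc numeral_2_eq_2)
  have "(\<Sum>c<w K. W K 0 c * hv K x c) = hv K x 0 - hv K x 1 + hv K x 2"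
    using row0[of "w K"] wK K1 by (simp add: W_def)
  also have "\<dots> = M (K-1) x" using Mk maxid unfolding hv_ge2[OF K1(1)] by simp
  finally show ?thesis using K1 by (simp add: Bv_def)
qed


definition BL where "BL k = blk (W k) (Bv k) (w (k+1)) (w k)"
definition tot where "tot = (\<Sum>k<K+1. length (BL k))"
definition th where "th dd = concat (map BL [0..<K+1]) @ replicate (dd - tot) 0"

lemma len_ll: "length ll = K + 2" by (simp add: ll_def)
lemma nth_ll: "m < K + 2 \<Longrightarrow> ll ! m = w m" by (simp add: ll_def del: upt_Suc)

lemma len_BL: "length (BL j) = w (j+1) * (w j + 1)"
  by (simp add: BL_def length_blk algebra_simps)

lemma offs_ll: "k \<le> K + 1 \<Longrightarrow> offs ll k = (\<Sum>j<k. length (BL j))"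
proof (induction k)
  case 0 then show ?case by (simp add: offs_def)
next
  case (Suc k)
  have "offs ll (Suc k) = offs ll k + ll ! (Suc k) * (ll ! k + 1)"
    by (simp add: offs_def)
  also have "\<dots> = (\<Sum>j<k. length (BL j)) + w (Suc k) * (w k + 1)"
    using Suc by (simp add: nth_ll)
  finally show ?case by (simp add: len_BL)
qed

lemma th_block: assumes "k \<le> K" "t < w (k+1) * w k + w (k+1)"
  shows "th dd ! (offs ll k + t) = BL k ! t"
proof -
  have "t < length (BL k)" using assms(2) by (simp add: BL_def length_blk)
  then show ?thesis unfolding th_def using offs_ll[of k] assms(1) nth_concat_blocks[of k "K+1" t BL] by simp
qed

lemma affine_layer: assumes "k \<le> K"
  shows "affine (th dd) (offs ll k) (w (k+1)) (w k) z = map (\<lambda>i. (\<Sum>j<w k. W k i j * z ! j) + Bv k i) [0..<w (k+1)]"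
  by (rule affine_blk) (use th_block[OF assms] in \<open>simp add: BL_def\<close>)

lemma hidden_ok: "1 \<le> k \<Longrightarrow> k \<le> K \<Longrightarrow> hidden (th dd) ll k x = map (hv k x) [0..<w k]"
proof (induction k)
  case 0 then show ?case by simp
next
  case (Suc k)
  show ?case
  proof (cases "k = 0")
    case True
    have "hidden (th dd) ll (Suc k) x = relu (affine (th dd) (offs ll 0) (w 1) (w 0) x)"
      using True K2 by (simp add: nth_ll)
    also have "\<dots> = map (\<lambda>i. max ((\<Sum>j<d. W 0 i j * x ! j) + Bv 0 i) 0) [0..<w 1]"
      using affine_layer[of 0] by (simp add: relu_def w2)
    also have "\<dots> = map (hv 1 x) [0..<w 1]"
      using T0 by (auto simp: w_def)
    finally show ?thesis using True by simp
  next
    case False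
    then have IH: "hidden (th dd) ll k x = map (hv k x) [0..<w k]" using Suc by simp
    have kK: "k < K" "k + 1 < K + 2" "k < K + 2" using Suc by auto
    have "hidden (th dd) ll (Suc k) x = relu (affine (th dd) (offs ll k) (w (k+1)) (w k) (map (hv k x) [0..<w k]))"
      using IH kK by (simp add: nth_ll)
    also have "\<dots> = map (\<lambda>i. max ((\<Sum>j<w k. W k i j * hv k x j) + Bv k i) 0) [0..<w (k+1)]"
      using affine_layer[of k] kK by (simp add: relu_def)
    also have "\<dots> = map (hv (k+1) x) [0..<w (k+1)]"
    proof (rule map_cong[OF refl])
      fix i assume "i \<in> set [0..<w (k+1)]"
      then have i: "i < w (k+1)" by simp
      show "max ((\<Sum>j<w k. W k i j * hv k x j) + Bv k i) 0 = hv (k+1) x i"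
      proof (cases "k = 1")
        case True then show ?thesis using T1[of i x] i by (simp add: numeral_2_eq_2)
      next
        case False then show ?thesis using Tk[of k i x] i kK \<open>k \<noteq> 0\<close> by simp
      qed
    qed
    finally show ?thesis by simp
  qed
qed

lemma realization_ok: "realization (th dd) ll u v x = clip u v [M (K-1) x]"
proof -
  have wK1: "w (K+1) = 1" using K2 by (simp add: w_def)
  have "realization (th dd) ll u v x = clip u v (affine (th dd) (offs ll K) (w (K+1)) (w K) (map (hv K x) [0..<w K]))"
    using hidden_ok[of K dd x] K2 by (simp add: realization_def len_ll nth_ll)
  also have "affine (th dd) (offs ll K) (w (K+1)) (w K) (map (hv K x) [0..<w K]) = [M (K-1) x]"
    using affine_layer[of K] Tout[of x] wK1 K2 by simp
  finally show ?thesis .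
qed


definition F where "F k = w k * (w (k-1) + 1)"

lemma sum_bound_gen: "3 * (\<Sum>k\<in>{3..n}. (2*real k - 3) * (2 * real k)) \<le> 4 * real n^3 - 3 * real n^2 - real n"
proof (induction n)
  case 0 then show ?case by simp
next
  case (Suc n)
  show ?case
  proof (cases "n < 2")
    case True
    then have "{3..Suc n} = {}" by auto
    moreover have "4 * real (Suc n)^3 - 3 * real (Suc n)^2 - real (Suc n) \<ge> 0"
    proof -
      have "real (Suc n) \<ge> 1" by simp
      then have "real (Suc n)^2 \<le> real (Suc n)^3" "real (Suc n)^1 \<le> real (Suc n)^2"
        by (intro power_increasing; simp)+
      then have "real (Suc n)^2 \<le> real (Suc n)^3" "real (Suc n) \<le> real (Suc n)^2" by simp_all
      then show ?thesis by linarith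
    qed
    ultimately show ?thesis by simp
  next
    case False
    then have "(\<Sum>k\<in>{3..Suc n}. (2*real k - 3) * (2 * real k)) = (\<Sum>k\<in>{3..n}. (2*real k - 3) * (2 * real k)) + (2*real (Suc n) - 3) * (2 * real (Suc n))"
      by simp
    then show ?thesis using Suc.IH by (simp add: algebra_simps power2_eq_square power3_eq_cube)
  qed
qed

lemma mid_sum: "(\<Sum>k\<in>{3..K}. real (F k)) = (\<Sum>k\<in>{3..K}. (2*real k - 3) * (2 * real k))"
proof -
  have "(\<Sum>k\<in>{3..K}. real (F k)) = (\<Sum>k\<in>{3..K}. real (F (K + 3 - k)))"
    by (rule sum.atLeastAtMost_rev)
  also have "\<dots> = (\<Sum>k\<in>{3..K}. (2*real k - 3) * (2 * real k))"
  proof (rule sum.cong[OF refl])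
    fix k assume "k \<in> {3..K}"
    then have k: "3 \<le> k" "k \<le> K" by auto
    have "w (K + 3 - k) = 2*k - 3" using k by (simp add: w_def, arith)
    moreover have "w (K + 3 - k - 1) = 2*k - 1" using k by (simp add: w_def, arith)
    ultimately have "F (K + 3 - k) = (2*k - 3) * (2*k)" using k by (simp add: F_def)
    then show "real (F (K + 3 - k)) = (2*real k - 3) * (2 * real k)" using k by (simp add: of_nat_diff)
  qed
  finally show ?thesis .
qed

lemma total_eq: "(\<Sum>k\<in>{1..K+1}. F k) = F 1 + F 2 + (\<Sum>k\<in>{3..K}. F k) + F (K+1)"
proof -
  have a1: "{1..K+1} = {1,2} \<union> {3..K} \<union> {K+1}" using K2 by auto
  show ?thesis unfolding a1 using K2 by (subst sum.union_disjoint; auto simp: sum.union_disjoint)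
qed

lemma total_bound: "real (\<Sum>k\<in>{1..K+1}. F k) \<le> 2 * real d^2 * real K + 5 * real d * real K^2 + 4/3 * real K^3"
proof -
  have F1: "real (F 1) = 2 * real d * real K * (real d + 1)" by (simp add: F_def w_def algebra_simps)
  have r2: "real (w 2) = 2 * real K - 1" using K2 by (simp add: w2 of_nat_diff)
  have F2: "real (F 2) = (2 * real K - 1) * (2 * real d * real K + 1)"
    unfolding F_def of_nat_mult using r2 by (simp add: w_def)
  have FK: "real (F (K+1)) = 4" using K2 by (simp add: F_def w_def)
  have S: "3 * (\<Sum>k\<in>{3..K}. real (F k)) \<le> 4 * real K^3 - 3 * real K^2 - real K"
    using mid_sum sum_bound_gen[of K] by simp
  have K2r: "real K \<ge> 2" using K2 by simp
  have "real d \<ge> 1" using d1 by simp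
  then have dK: "real d * real K^2 \<ge> real K^2" using mult_right_mono[of 1 "real d" "real K^2"] by simp
  have KK: "real K^2 \<ge> 2 * real K" using K2r by (simp add: power2_eq_square mult_right_mono)
  have "real (\<Sum>k\<in>{1..K+1}. F k) = real (F 1) + real (F 2) + (\<Sum>k\<in>{3..K}. real (F k)) + real (F (K+1))"
    by (simp only: total_eq of_nat_add of_nat_sum)
  also have "\<dots> = 2 * real d^2 * real K + 4 * real d * real K^2 + 2 * real K - 1 + (\<Sum>k\<in>{3..K}. real (F k)) + 4"
    unfolding F1 F2 FK by (simp add: algebra_simps power2_eq_square)
  also have "\<dots> \<le> 2 * real d^2 * real K + 5 * real d * real K^2 + 4/3 * real K^3"
    using S dK KK K2r by linarith
  finally show ?thesis .
qed


lemma yc_bounds: assumes "p!i \<le> q!i" shows "p!i \<le> yc j i" "yc j i \<le> q!i"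
proof -
  have N0: "real N > 0" using N1 by simp
  define r where "r = real (min (G!j!i) N) / real N"
  have r0: "0 \<le> r" by (simp add: r_def)
  have r1: "r \<le> 1" using N0 by (simp add: r_def divide_le_eq_1)
  have e: "yc j i = p!i + r * (q!i - p!i)" by (simp add: yc_def r_def)
  have "0 \<le> r * (q!i - p!i)" using r0 assms by simp
  moreover have "r * (q!i - p!i) \<le> 1 * (q!i - p!i)" using r1 assms by (intro mult_right_mono) auto
  ultimately show "p!i \<le> yc j i" "yc j i \<le> q!i" unfolding e by simp_all
qed

lemma W_mem: "W k n c \<in> {0, 1, -1, L, -L}"
proof -
  have "W0 n c \<in> {0, 1, -1, L, -L}" by (simp add: W0_def)
  moreover have "W1 n c \<in> {0, 1, -1, L, -L}" by (simp add: W1_def)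
  moreover have "Wc n c \<in> {0, 1, -1, L, -L}" by (simp add: Wc_def)
  ultimately show ?thesis by (simp add: W_def)
qed

lemma W_bound: "0 \<le> L \<Longrightarrow> \<bar>W k n c\<bar> \<le> max 1 L"
  using W_mem[of k n c] by auto

lemma Bv_bound: assumes "\<forall>j i. i < d \<longrightarrow> \<bar>yc j i\<bar> \<le> B" "\<forall>j. \<bar>f (y j)\<bar> \<le> S" "2*S \<le> B"
  shows "\<bar>Bv k n\<bar> \<le> B"
proof -
  have S0: "0 \<le> S" using assms(2) by (meson abs_ge_zero order_trans)
  have "(n mod (2*d)) div 2 < d"
  proof -
    have "n mod (2*d) < 2*d" using d1 by simp
    moreover have "\<And>m. m < 2*d \<Longrightarrow> m div 2 < d" by presburger
    ultimately show ?thesis by blast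
  qed
  then have b0: "\<bar>yc (n div (2*d)) ((n mod (2*d)) div 2)\<bar> \<le> B" using assms(1) by blast
  have b1: "\<bar>f (y j)\<bar> \<le> B" for j using assms(2)[rule_format, of j] assms(3) S0 by linarith
  have b2: "\<bar>f (y 1) - f (y 0)\<bar> \<le> B" using assms(2)[rule_format, of 0] assms(2)[rule_format, of 1] assms(3) by linarith
  have "Bv k n = 0 \<or> \<bar>Bv k n\<bar> = \<bar>yc (n div (2*d)) ((n mod (2*d)) div 2)\<bar> \<or> (\<exists>j. \<bar>Bv k n\<bar> = \<bar>f (y j)\<bar>)
      \<or> Bv k n = f (y 1) - f (y 0)"
    unfolding Bv_def by (auto simp: abs_mult)
  then show ?thesis using b0 b1 b2 assms(3) S0 by auto
qed

lemma blk_set: "set (blk W' b r s) \<subseteq> {W' i j | i j. True} \<union> range b"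
  by (auto simp: blk_def)

lemma th_set: "t \<in> set (th dd) \<Longrightarrow> t = 0 \<or> (\<exists>k i j. t = W k i j) \<or> (\<exists>k i. t = Bv k i)"
proof -
  assume "t \<in> set (th dd)"
  then have "t = 0 \<or> (\<exists>k. t \<in> set (BL k))" by (auto simp: th_def)
  then show ?thesis using blk_set unfolding BL_def by blast
qed

lemma grid_near:
  assumes "length x = d" "\<forall>i<d. p!i \<le> x!i \<and> x!i \<le> q!i"
  shows "\<exists>j<K. (\<Sum>i<d. \<bar>x!i - yc j i\<bar>) \<le> (\<Sum>i<d. q!i - p!i) / (2 * real N)"
proof -
  have N0: "real N > 0" using N1 by simp
  define kk where "kk i = nat \<lfloor>real N * (x!i - p!i) / (q!i - p!i) + 1/2\<rfloor>" for i
  define ks where "ks = map kk [0..<d]"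
  have kkN: "kk i \<le> N \<and> \<bar>x!i - (p!i + real (kk i) / real N * (q!i - p!i))\<bar> \<le> (q!i - p!i) / (2 * real N)" if i: "i < d" for i
  proof -
    have pq: "p!i \<le> x!i" "x!i \<le> q!i" using assms(2) i by auto
    show ?thesis
    proof (cases "q!i = p!i")
      case True
      then have "x!i = p!i" using pq by simp
      then show ?thesis using True by (simp add: kk_def)
    next
      case False
      then have del: "q!i - p!i > 0" using pq by simp
      define t where "t = real N * (x!i - p!i) / (q!i - p!i)"
      have t0: "0 \<le> t" using pq del by (simp add: t_def)
      have tN: "t \<le> real N"
      proof -
        have "x!i - p!i \<le> q!i - p!i" using pq by simp
        then have "(x!i - p!i) / (q!i - p!i) \<le> 1" using del by simp
        then have "real N * ((x!i - p!i) / (q!i - p!i)) \<le> real N * 1" using N0 by (intro mult_left_mono) auto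
        then show ?thesis by (simp add: t_def)
      qed
      have fl0: "0 \<le> \<lfloor>t + 1/2\<rfloor>" using t0 by simp
      have kr: "real (kk i) = of_int \<lfloor>t + 1/2\<rfloor>" using fl0 by (simp add: kk_def t_def)
      have k1: "real (kk i) \<le> t + 1/2" using kr by linarith
      have k2: "t - 1/2 < real (kk i)" using kr by linarith
      have "real (kk i) < real N + 1" using k1 tN by linarith
      then have kN: "kk i \<le> N" by linarith
      have xe: "x!i - p!i = t * (q!i - p!i) / real N" using del N0 by (simp add: t_def field_simps)
      have "x!i - (p!i + real (kk i) / real N * (q!i - p!i)) = (t - real (kk i)) * (q!i - p!i) / real N"
        using xe N0 by (simp add: field_simps)
      also have "\<bar>\<dots>\<bar> = \<bar>t - real (kk i)\<bar> * (q!i - p!i) / real N" using del N0 by (simp add: abs_mult)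
      also have "\<dots> \<le> (1/2) * (q!i - p!i) / real N"
      proof -
        have "\<bar>t - real (kk i)\<bar> \<le> 1/2" using k1 k2 unfolding abs_le_iff by linarith
        then show ?thesis using del N0 by (intro divide_right_mono mult_right_mono) auto
      qed
      finally show ?thesis using kN by simp
    qed
  qed
  have "\<forall>i<d. kk i \<le> N" using kkN by blast
  then have "ks \<in> set G" unfolding G_def set_n_lists ks_def by (auto simp: less_Suc_eq_le)
  then obtain j where j: "j < length G" "G ! j = ks" by (meson in_set_conv_nth)
  have jK: "j < K" using j(1) by (simp add: G_def K_def length_n_lists)
  have "(\<Sum>i<d. \<bar>x!i - yc j i\<bar>) \<le> (\<Sum>i<d. (q!i - p!i) / (2 * real N))"
  proof (rule sum_mono)
    fix i assume "i \<in> {..<d}"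
    then have i: "i < d" by simp
    have "yc j i = p!i + real (kk i) / real N * (q!i - p!i)"
      using kkN[OF i] i by (simp add: yc_def j(2) ks_def)
    then show "\<bar>x!i - yc j i\<bar> \<le> (q!i - p!i) / (2 * real N)" using kkN[OF i] by simp
  qed
  also have "\<dots> = (\<Sum>i<d. q!i - p!i) / (2 * real N)" by (simp add: sum_divide_distrib)
  finally show ?thesis using jK by blast
qed

end

lemma clip_le:
  fixes u v :: ereal
  assumes "u \<le> ereal z" "ereal z \<le> v"
  shows "\<bar>z - real_of_ereal (max u (min (ereal g) v))\<bar> \<le> \<bar>z - g\<bar>"
proof (cases "ereal g \<le> u")
  case True
  then obtain a where a: "u = ereal a" using assms(1) by (cases u) auto
  have "min (ereal g) v \<le> u" using True by (simp add: min.coboundedI1)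
  then have "max u (min (ereal g) v) = u" by (rule max.absorb1)
  then show ?thesis using a True assms(1) by simp
next
  case False
  show ?thesis
  proof (cases "v \<le> ereal g")
    case True
    then obtain b where b: "v = ereal b" using assms(2) by (cases v) auto
    have "min (ereal g) v = v" using True by (simp add: min_def)
    moreover have "u \<le> v" using assms by (rule order_trans)
    then have "max u v = v" by (rule max.absorb2)
    ultimately show ?thesis using b True assms(2) by simp
  next
    case F2: False
    have "ereal g \<le> v" using F2 by simp
    then have "min (ereal g) v = ereal g" by (rule min.absorb1)
    moreover have "u \<le> ereal g" using False by simp
    then have "max u (ereal g) = ereal g" by (rule max.absorb2)
    ultimately show ?thesis by simp
  qed
qed

lemma eucl_le: "length x = n \<Longrightarrow> eucl_dist x y \<le> (\<Sum>i<n. \<bar>x!i - y!i\<bar>)"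
  using L2_set_le_sum_abs[of "\<lambda>i. x!i - y!i" "{..<n}"] by (simp add: eucl_dist_def L2_set_def)



theorem corollary3p9:
  fixes d dd N :: nat and L :: real and u v :: ereal
    and p q :: "real list" and f :: "real list \<Rightarrow> real" and D :: "real list set"
  assumes "d \<ge> 1" and "dd \<ge> 1" and "N \<ge> 1"
    and "u < \<infinity>" and "u < v"
    and "real dd \<ge> 2 * real d ^ 2 * (real N + 1) ^ d + 5 * real d * (real N + 1) ^ (2 * d)
                    + 4 / 3 * (real N + 1) ^ (3 * d)"
    and "length p = d" and "length q = d"
    and "\<forall>i<d. p ! i \<le> q ! i"
    and "(MAX j\<in>{..<d}. q ! j - p ! j) > 0"
    and "D = {x. length x = d \<and> (\<forall>i<d. p ! i \<le> x ! i \<and> x ! i \<le> q ! i)}"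
    and "\<forall>x\<in>D. u \<le> ereal (f x) \<and> ereal (f x) \<le> v"
    and "\<forall>x\<in>D. \<forall>y\<in>D. \<bar>f x - f y\<bar> \<le> L * eucl_dist x y"
  shows "\<exists>\<theta> l. length \<theta> = dd \<and> length l \<ge> 2 \<and> (\<forall>k<length l. l ! k \<ge> 1)
      \<and> l ! 0 = d \<and> l ! (length l - 1) = 1
      \<and> maxnorm \<theta> \<le> Max {1, L, maxnorm p, maxnorm q, 2 * (SUP z\<in>D. \<bar>f z\<bar>)}
      \<and> (\<Sum>k\<in>{1..length l - 1}. l ! k * (l ! (k - 1) + 1)) \<le> dd
      \<and> (SUP x\<in>D. \<bar>f x - hd (realization \<theta> l u v x)\<bar>)
           \<le> L / real N * (\<Sum>i<d. \<bar>q ! i - p ! i\<bar>)"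
proof -
  interpret netc d N L p q f using assms(1,3) by unfold_locales
  have inD: "x \<in> D \<longleftrightarrow> length x = d \<and> (\<forall>i<d. p!i \<le> x!i \<and> x!i \<le> q!i)" for x
    using assms(11) by simp
  have pD: "p \<in> D" using inD assms(7,9) by auto
  have qD: "q \<in> D" using inD assms(8,9) by auto
  have Dne: "D \<noteq> {}" using pD by blast
  have lip: "\<bar>f x - f z\<bar> \<le> L * eucl_dist x z" if "x \<in> D" "z \<in> D" for x z
    using assms(13) that by blast
  have "(MAX j\<in>{..<d}. q!j - p!j) \<in> (\<lambda>j. q!j - p!j) ` {..<d}"
  proof (rule Max_in)
    show "(\<lambda>j. q!j - p!j) ` {..<d} \<noteq> {}" using assms(1) by (metis empty_iff image_is_empty lessThan_iff less_le_trans zero_less_one)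
  qed simp
  then obtain j0 where j0: "j0 < d" "q!j0 - p!j0 > 0" using assms(10) by auto
  have "(q!j0 - p!j0)^2 \<le> (\<Sum>i<d. (q!i - p!i)^2)"
    by (rule member_le_sum) (use j0 in auto)
  moreover have "(q!j0 - p!j0)^2 > 0" using j0 by simp
  ultimately have "(\<Sum>i<d. (q!i - p!i)^2) > 0" by linarith
  then have "eucl_dist q p > 0" using assms(8) by (simp add: eucl_dist_def)
  moreover have "\<bar>f q - f p\<bar> \<le> L * eucl_dist q p" using lip qD pD by blast
  ultimately have L0: "L \<ge> 0"
    by (metis abs_ge_zero less_le_not_le mult_neg_pos order_trans not_le)
  have dist_le: "eucl_dist x z \<le> (\<Sum>i<d. \<bar>x!i - z!i\<bar>)" if "x \<in> D" for x z
    using eucl_le[of x d z] that inD by simp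
  have lenD: "(\<Sum>i<d. \<bar>x!i - p!i\<bar>) \<le> (\<Sum>i<d. q!i - p!i)" if "x \<in> D" for x
    by (rule sum_mono) (use that inD in auto)
  have fb: "\<bar>f z\<bar> \<le> \<bar>f p\<bar> + L * (\<Sum>i<d. q!i - p!i)" if "z \<in> D" for z
  proof -
    have "\<bar>f z - f p\<bar> \<le> L * eucl_dist z p" using lip that pD by blast
    also have "\<dots> \<le> L * (\<Sum>i<d. \<bar>z!i - p!i\<bar>)" using dist_le[OF that] L0 by (intro mult_left_mono) auto
    also have "\<dots> \<le> L * (\<Sum>i<d. q!i - p!i)" using lenD[OF that] L0 by (intro mult_left_mono) auto
    finally show ?thesis by linarith
  qed
  have bdd: "bdd_above ((\<lambda>z. \<bar>f z\<bar>) ` D)"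
    using fb by (intro bdd_aboveI[of _ "\<bar>f p\<bar> + L * (\<Sum>i<d. q!i - p!i)"]) auto
  define S where "S = (SUP z\<in>D. \<bar>f z\<bar>)"
  have yD: "y j \<in> D" for j
    using yc_bounds assms(9) by (auto simp: inD y_def)
  have fyS: "\<bar>f (y j)\<bar> \<le> S" for j
    unfolding S_def using bdd yD by (rule cSUP_upper2) auto
  define B where "B = Max {1, L, maxnorm p, maxnorm q, 2 * S}"
  have B: "1 \<le> B" "L \<le> B" "maxnorm p \<le> B" "maxnorm q \<le> B" "2 * S \<le> B"
    unfolding B_def by auto
  have mn: "\<bar>xs ! i\<bar> \<le> maxnorm xs" if "i < length xs" for xs i
    unfolding maxnorm_def using that by (intro Max_ge) auto
  have ycB: "\<forall>j i. i < d \<longrightarrow> \<bar>yc j i\<bar> \<le> B"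
  proof (intro allI impI)
    fix j i assume i: "i < d"
    have "p!i \<le> yc j i" "yc j i \<le> q!i" using yc_bounds assms(9) i by auto
    moreover have "\<bar>p!i\<bar> \<le> B" "\<bar>q!i\<bar> \<le> B" using mn[of i p] mn[of i q] B assms(7,8) i by auto
    ultimately show "\<bar>yc j i\<bar> \<le> B" by linarith
  qed
  have offsF: "offs ll (K+1) = (\<Sum>k\<in>{1..K+1}. F k)"
    unfolding offs_def F_def by (intro sum.cong) (auto simp: nth_ll)
  have totF: "tot = (\<Sum>k\<in>{1..K+1}. F k)" using offs_ll[of "K+1"] offsF by (simp add: tot_def)
  have Kr: "(real N + 1) ^ d = real K" by (simp add: K_def add.commute)
  have Kr2: "(real N + 1) ^ (2*d) = real K ^ 2"
    unfolding mult.commute[of 2 d] power_mult Kr ..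
  have Kr3: "(real N + 1) ^ (3*d) = real K ^ 3"
    unfolding mult.commute[of 3 d] power_mult Kr ..
  have "real tot \<le> real dd" using total_bound assms(6) totF unfolding Kr Kr2 Kr3 by simp
  then have totdd: "tot \<le> dd" by simp
  have lenth: "length (th dd) = dd"
  proof -
    have "length (concat (map BL [0..<K+1])) = tot" unfolding tot_def by (simp add: length_concat sum_list_sum_nth atLeast0LessThan)
    then show ?thesis using totdd by (simp add: th_def)
  qed
  have thB: "maxnorm (th dd) \<le> B"
    unfolding maxnorm_def
  proof (rule Max.boundedI)
    show "finite (insert 0 (abs ` set (th dd)))" by simp
    show "insert 0 (abs ` set (th dd)) \<noteq> {}" by simp
    fix t assume "t \<in> insert 0 (abs ` set (th dd))"
    then consider "t = 0" | s where "s \<in> set (th dd)" "t = \<bar>s\<bar>" by auto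
    then show "t \<le> B"
    proof cases
      case 1 then show ?thesis using B by simp
    next
      case 2
      from th_set[OF 2(1)] show ?thesis
      proof (elim disjE exE)
        assume "s = 0" then show ?thesis using 2 B by simp
      next
        fix k i j assume "s = W k i j"
        then show ?thesis using 2 W_bound[OF L0, of k i j] B by simp
      next
        fix k i assume "s = Bv k i"
        then show ?thesis using 2 Bv_bound[OF ycB, of S k i] fyS B by simp
      qed
    qed
  qed
  have err: "\<bar>f x - hd (realization (th dd) ll u v x)\<bar> \<le> L / real N * (\<Sum>i<d. \<bar>q ! i - p ! i\<bar>)"
    if xD: "x \<in> D" for x
  proof -
    have Mdef: "M (K-1) x = Max ((\<lambda>t. a t x) ` {..K-1})" by (simp add: M_def)
    have up: "a t x \<le> f x" for t
    proof -
      have "f (y t) - f x \<le> L * eucl_dist (y t) x" using lip[OF yD[of t] xD] by linarith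
      also have "\<dots> \<le> L * (\<Sum>i<d. \<bar>y t ! i - x!i\<bar>)" using dist_le[OF yD[of t]] L0 by (intro mult_left_mono) auto
      also have "(\<Sum>i<d. \<bar>y t ! i - x!i\<bar>) = (\<Sum>i<d. \<bar>x!i - yc t i\<bar>)"
        by (intro sum.cong) (auto simp: y_def abs_minus_commute)
      finally show ?thesis by (simp add: a_def)
    qed
    have Mup: "M (K-1) x \<le> f x" unfolding Mdef using up by (intro Max.boundedI) auto
    obtain j where j: "j < K" "(\<Sum>i<d. \<bar>x!i - yc j i\<bar>) \<le> (\<Sum>i<d. q!i - p!i) / (2 * real N)"
      using grid_near[of x] xD inD by auto
    have "f x - f (y j) \<le> L * eucl_dist x (y j)" using lip[OF xD yD[of j]] by linarith
    also have "\<dots> \<le> L * (\<Sum>i<d. \<bar>x!i - y j ! i\<bar>)" using dist_le[OF xD] L0 by (intro mult_left_mono) auto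
    also have "(\<Sum>i<d. \<bar>x!i - y j ! i\<bar>) = (\<Sum>i<d. \<bar>x!i - yc j i\<bar>)"
      by (intro sum.cong) (auto simp: y_def)
    finally have "f x - a j x \<le> 2 * L * (\<Sum>i<d. \<bar>x!i - yc j i\<bar>)" by (simp add: a_def)
    also have "\<dots> \<le> 2 * L * ((\<Sum>i<d. q!i - p!i) / (2 * real N))" using j(2) L0 by (intro mult_left_mono) auto
    also have "\<dots> = L / real N * (\<Sum>i<d. \<bar>q ! i - p ! i\<bar>)"
    proof -
      have "(\<Sum>i<d. q!i - p!i) = (\<Sum>i<d. \<bar>q ! i - p ! i\<bar>)" using assms(9) by (intro sum.cong) auto
      then show ?thesis by simp
    qed
    finally have l1: "f x - a j x \<le> L / real N * (\<Sum>i<d. \<bar>q ! i - p ! i\<bar>)" .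
    have "a j x \<le> M (K-1) x" unfolding Mdef using j(1) by (intro Max_ge) auto
    then have "\<bar>f x - M (K-1) x\<bar> \<le> L / real N * (\<Sum>i<d. \<bar>q ! i - p ! i\<bar>)" using l1 Mup by linarith
    moreover have "hd (realization (th dd) ll u v x) = real_of_ereal (max u (min (ereal (M (K-1) x)) v))"
      by (simp add: realization_ok clip_def)
    moreover have "\<bar>f x - real_of_ereal (max u (min (ereal (M (K-1) x)) v))\<bar> \<le> \<bar>f x - M (K-1) x\<bar>"
      using assms(12) xD by (intro clip_le) auto
    ultimately show ?thesis by linarith
  qed
  have sup: "(SUP x\<in>D. \<bar>f x - hd (realization (th dd) ll u v x)\<bar>) \<le> L / real N * (\<Sum>i<d. \<bar>q ! i - p ! i\<bar>)"
    using Dne err by (intro cSUP_least) auto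
  have wpos: "w k \<ge> 1" for k using assms(1) K2 by (auto simp: w_def)
  have l_props: "length ll \<ge> 2" "\<forall>k<length ll. ll ! k \<ge> 1" "ll ! 0 = d" "ll ! (length ll - 1) = 1"
    using wpos K2 by (auto simp: len_ll nth_ll w_def)
  have sum_l: "(\<Sum>k\<in>{1..length ll - 1}. ll ! k * (ll ! (k - 1) + 1)) \<le> dd"
    using offsF totF totdd by (simp add: len_ll offs_def)
  show ?thesis
    apply (rule exI[of _ "th dd"], rule exI[of _ ll])
    using lenth l_props thB sup sum_l unfolding B_def S_def by simp
qed

end
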